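(* If a spherical curve $P$ has a trigon of type B, then $r(P)\le 3$.
   Context: A spherical curve is a smooth immersion $P:S^1\to S^2$ whose self-intersections are finitely many transverse double points, called crossings. It is oriented and has at least one crossing. Regions are the components of $S^2\setminus P(S^1)$, and edges are the arcs of the curve between consecutive crossings. A trigon is a region bounded by three edges. The Gauss word is the cyclic word of crossings met in one traversal of the curve; each crossing appears twice. Crossings $a,b$ are interlaced if their occurrences alternate $a\dots b\dots a\dots b$ in the cyclic word, i.e., their chords cross in the chord diagram. Let a trigon have crossings $x,y,z$. Each of its three edges gives a block of two consecutive letters in the Gauss word, one block on each of $\{x,y\}$, $\{y,z\}$, $\{z,x\}$, so the word has the form $B_1W_1B_2W_2B_3W_3$ with the $W_i$ free of $x,y,z$. The trigon's type is determined by how many of the three pairs among $x,y,z$ are interlaced: type A if exactly two pairs are interlaced; type B if exactly one; type C if all three (e.g. $xy\,W_1\,zx\,W_2\,yz\,W_3$, as in the trefoil curve); type D if none (e.g. $xy\,W_1\,yz\,W_2\,zx\,W_3$). A crossing is reducible if no crossing is interlaced with it; equivalently, only three distinct regions meet at it. $P$ is reducible if it has a reducible crossing. The inverse-half-twisted splice $I$ at a crossing $p$ takes the curve with cyclic Gauss word $p\,A\,p\,B$ to the curve with Gauss word $\overline{A}\,B$, where $\overline{A}$ is $A$ reversed. Geometrically, $p$ is smoothed in the unique way giving a single closed curve, and the result is re-oriented. The reductivity $r(P)$ is the minimal number of successive applications of $I$ needed to reach a reducible spherical curve; $r(P)=0$ if $P$ is reducible. *)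

theory Defs
  imports Main "HOL-Library.Extended_Nat"
begin

text \<open>
A spherical curve with n >= 1 crossings is encoded (up to orientation-preserving
homeomorphism of the sphere) by
 * its Gauss word w (a list of length 2n in which each crossing label occurs exactly
   twice; position k of w is the k-th crossing passed, edge k runs from position k
   to position k+1 mod 2n), and
 * a local orientation s c at each crossing c, fixing the counterclockwise cyclic
   order of the four half-edges at c (both choices give a transverse crossing).
Half-edges (darts) are pairs (k, b) with k < length w: (k, True) is the outgoing
end of edge k at position k, (k, False) the incoming end of edge k-1 at position k.
The data define a combinatorial map (rotation system) on the 4-regular graph;
the faces are the orbits of the face permutation, and the map lies on the sphere
iff Euler's formula V - E + F = 2 holds, i.e. F = n + 2 (the graph is connected).
\<close>

definition gauss_word :: "'a list \<Rightarrow> bool" where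
  "gauss_word w \<longleftrightarrow> w \<noteq> [] \<and> (\<forall>c\<in>set w. count_list w c = 2)"

definition partner :: "'a list \<Rightarrow> nat \<Rightarrow> nat" where
  "partner w k = (THE j. j < length w \<and> j \<noteq> k \<and> w ! j = w ! k)"

definition darts :: "'a list \<Rightarrow> (nat \<times> bool) set" where
  "darts w = {0..<length w} \<times> UNIV"

fun edge_flip :: "'a list \<Rightarrow> nat \<times> bool \<Rightarrow> nat \<times> bool" where
  "edge_flip w (k, True) = (Suc k mod length w, False)"
| "edge_flip w (k, False) = ((k + length w - 1) mod length w, True)"

text \<open>Counterclockwise successor of a dart around its crossing.\<close>
definition rot :: "'a list \<Rightarrow> ('a \<Rightarrow> bool) \<Rightarrow> nat \<times> bool \<Rightarrow> nat \<times> bool" where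
  "rot w s d = (let k = fst d; j = partner w k; i1 = min k j; i2 = max k j in
     if s (w ! k) then
       (if d = (i1, True) then (i2, True)
        else if d = (i2, True) then (i1, False)
        else if d = (i1, False) then (i2, False)
        else (i1, True))
     else
       (if d = (i1, True) then (i2, False)
        else if d = (i2, False) then (i1, False)
        else if d = (i1, False) then (i2, True)
        else (i1, True)))"

definition face_perm :: "'a list \<Rightarrow> ('a \<Rightarrow> bool) \<Rightarrow> nat \<times> bool \<Rightarrow> nat \<times> bool" where
  "face_perm w s = rot w s \<circ> edge_flip w"

definition face_of :: "'a list \<Rightarrow> ('a \<Rightarrow> bool) \<Rightarrow> nat \<times> bool \<Rightarrow> (nat \<times> bool) set" where
  "face_of w s d = {(face_perm w s ^^ k) d | k. True}"

definition regions :: "'a list \<Rightarrow> ('a \<Rightarrow> bool) \<Rightarrow> (nat \<times> bool) set set" where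
  "regions w s = face_of w s ` darts w"

definition spherical_curve :: "'a list \<Rightarrow> ('a \<Rightarrow> bool) \<Rightarrow> bool" where
  "spherical_curve w s \<longleftrightarrow> gauss_word w \<and> card (regions w s) = length w div 2 + 2"

definition crossing_at :: "'a list \<Rightarrow> nat \<times> bool \<Rightarrow> 'a" where
  "crossing_at w d = w ! fst d"

definition interlaced :: "'a list \<Rightarrow> 'a \<Rightarrow> 'a \<Rightarrow> bool" where
  "interlaced w a b \<longleftrightarrow> a \<noteq> b \<and>
     (\<exists>p q r t. p < q \<and> q < r \<and> r < t \<and> t < length w \<and>
        ((w!p = a \<and> w!q = b \<and> w!r = a \<and> w!t = b) \<or>
         (w!p = b \<and> w!q = a \<and> w!r = b \<and> w!t = a)))"

definition is_trigon :: "'a list \<Rightarrow> ('a \<Rightarrow> bool) \<Rightarrow> (nat \<times> bool) set \<Rightarrow> 'a \<Rightarrow> 'a \<Rightarrow> 'a \<Rightarrow> bool" where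
  "is_trigon w s R x y z \<longleftrightarrow> R \<in> regions w s \<and> card R = 3 \<and>
     x \<noteq> y \<and> y \<noteq> z \<and> x \<noteq> z \<and> crossing_at w ` R = {x, y, z}"

definition has_trigon_type_B :: "'a list \<Rightarrow> ('a \<Rightarrow> bool) \<Rightarrow> bool" where
  "has_trigon_type_B w s \<longleftrightarrow> (\<exists>R x y z. is_trigon w s R x y z \<and>
     ((interlaced w x y \<and> \<not> interlaced w y z \<and> \<not> interlaced w z x) \<or>
      (\<not> interlaced w x y \<and> interlaced w y z \<and> \<not> interlaced w z x) \<or>
      (\<not> interlaced w x y \<and> \<not> interlaced w y z \<and> interlaced w z x)))"

definition reducible :: "'a list \<Rightarrow> bool" where
  "reducible w \<longleftrightarrow> (\<exists>c\<in>set w. \<forall>d\<in>set w. \<not> interlaced w c d)"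

text \<open>Inverse-half-twisted splice: cyclic word p A p B becomes rev A @ B.\<close>
definition splice :: "'a list \<Rightarrow> 'a \<Rightarrow> 'a list" where
  "splice w p = (let i = (LEAST i. i < length w \<and> w ! i = p); j = partner w i in
     rev (take (j - Suc i) (drop (Suc i) w)) @ drop (Suc j) w @ take i w)"

fun splice_reach :: "nat \<Rightarrow> 'a list \<Rightarrow> 'a list \<Rightarrow> bool" where
  "splice_reach 0 w w' \<longleftrightarrow> w' = w"
| "splice_reach (Suc k) w w' \<longleftrightarrow> (\<exists>p\<in>set w. splice_reach k (splice w p) w')"

text \<open>Reductivity (infinity if no reducible curve is ever reached).\<close>
definition reductivity :: "'a list \<Rightarrow> enat" where
  "reductivity w = (INF k \<in> {k. \<exists>w'. splice_reach k w w' \<and> reducible w'}. enat k)"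

end

theory Submission
  imports Defs
begin

lemma decomp2:
  assumes "count_list w p = 2"
  shows "\<exists>C A B. w = C @ p # A @ p # B \<and> p \<notin> set C \<and> p \<notin> set A \<and> p \<notin> set B"
proof -
  obtain C r where 1: "w = C @ p # r" "p \<notin> set C" "count_list r p = 1"
    using count_list_Suc_split_first[of w p 1] assms by auto
  obtain A B where 2: "r = A @ p # B" "p \<notin> set A" "count_list B p = 0"
    using count_list_Suc_split_first[of r p 0] 1(3) by auto
  show ?thesis using 1 2 by (auto simp: count_list_0_iff)
qed

lemma pos2:
  assumes "w = C @ c # A @ c # B" "c \<notin> set C" "c \<notin> set A" "c \<notin> set B"
    "j < length w" "w ! j = c"
  shows "j = length C \<or> j = length C + length A + 1"
proof (rule ccontr)
  assume h: "\<not> ?thesis"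
  consider "j < length C" | "length C < j \<and> j < length C + length A + 1" | "j > length C + length A + 1"
    using h by linarith
  then show False
  proof cases
    case 1 then have "w ! j = C ! j" using assms(1) by (simp add: nth_append)
    then show False using 1 assms by (metis nth_mem)
  next
    case 2 then obtain i where i: "j = length C + Suc i" "i < length A"
    proof -
      have "j = length C + Suc (j - length C - 1)" "j - length C - 1 < length A" using 2 by auto
      then show ?thesis using that by blast
    qed
    then have "w ! j = A ! i" using assms(1) by (simp add: nth_append_length_plus nth_append)
    then show False using i assms by (metis nth_mem)
  next
    case 3 then obtain i where i: "j = length C + Suc (length A + Suc i)"
    proof -
      have "j = length C + Suc (length A + Suc (j - length C - length A - 2))" using 3 by auto
      then show ?thesis using that by blast
    qed
    then have "w ! j = B ! i" using assms(1) by (simp add: nth_append_length_plus nth_append)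
    moreover have "i < length B" using i assms(1,5) by simp
    ultimately show False using assms by (metis nth_mem)
  qed
qed

lemma splice_formula:
  assumes "w = C @ p # A @ p # B" "p \<notin> set C" "p \<notin> set A" "p \<notin> set B"
  shows "splice w p = rev A @ B @ C"
proof -
  have L: "(LEAST i. i < length w \<and> w ! i = p) = length C"
  proof (rule Least_equality)
    show "length C < length w \<and> w ! length C = p" using assms(1) by simp
    fix y assume "y < length w \<and> w ! y = p"
    then show "length C \<le> y" using pos2[OF assms, of y] by auto
  qed
  have P: "partner w (length C) = length C + length A + 1"
    unfolding partner_def
  proof (rule the_equality)
    show "length C + length A + 1 < length w \<and> length C + length A + 1 \<noteq> length C \<and>
      w ! (length C + length A + 1) = w ! length C"
      using assms(1) by (simp add: nth_append)
    fix j assume "j < length w \<and> j \<noteq> length C \<and> w ! j = w ! length C"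
    then show "j = length C + length A + 1" using pos2[OF assms, of j] assms(1) by (auto simp: nth_append)
  qed
  show ?thesis unfolding splice_def Let_def L P using assms(1) by simp
qed

lemma nth3:
  assumes "w = u @ z # m @ z' # v" "j < length w"
  shows "(j < length u \<longrightarrow> w ! j \<in> set u) \<and>
         (length u < j \<and> j < length u + length m + 1 \<longrightarrow> w ! j \<in> set m) \<and>
         (length u + length m + 1 < j \<longrightarrow> w ! j \<in> set v)"
proof (intro conjI impI)
  assume "j < length u" then show "w ! j \<in> set u" using assms(1) by (simp add: nth_append)
next
  assume h: "length u < j \<and> j < length u + length m + 1"
  define i where "i = j - length u - 1"
  have e: "j = length u + Suc i" "i < length m" using h unfolding i_def by auto
  have "w ! j = m ! i" using assms(1) e by (simp add: nth_append)
  then show "w ! j \<in> set m" using e by simp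
next
  assume h: "length u + length m + 1 < j"
  have e: "j = length u + Suc (length m + Suc (j - length u - length m - 2))" using h by auto
  have "w ! j = v ! (j - length u - length m - 2)" using assms(1) by (subst e) (simp add: nth_append)
  moreover have "j - length u - length m - 2 < length v" using h assms by simp
  ultimately show "w ! j \<in> set v" by (metis nth_mem)
qed

lemma isolated:
  assumes "w = u @ z # m @ z # v" "z \<notin> set u" "z \<notin> set m" "z \<notin> set v"
    "\<forall>c\<in>set m. c \<notin> set u \<and> c \<notin> set v"
  shows "\<not> interlaced w z d"
proof
  assume "interlaced w z d"
  then obtain p q r t where o: "p < q" "q < r" "r < t" "t < length w" and
    c: "(w!p = z \<and> w!q = d \<and> w!r = z \<and> w!t = d) \<or> (w!p = d \<and> w!q = z \<and> w!r = d \<and> w!t = z)"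
    and dz: "z \<noteq> d"
    unfolding interlaced_def by blast
  note P = pos2[OF assms(1-4)]
  note N = nth3[OF assms(1)]
  from c show False
  proof
    assume h: "w!p = z \<and> w!q = d \<and> w!r = z \<and> w!t = d"
    have "p = length u" "r = length u + length m + 1" using P[of p] P[of r] h o by auto
    then have "d \<in> set m" "d \<in> set v" using N[of q] N[of t] h o by auto
    then show False using assms(5) by blast
  next
    assume h: "w!p = d \<and> w!q = z \<and> w!r = d \<and> w!t = z"
    have "q = length u" "t = length u + length m + 1" using P[of q] P[of t] h o by auto
    then have "d \<in> set u" "d \<in> set m" using N[of p] N[of r] h o by auto
    then show False using assms(5) by blast
  qed
qed

lemma interlaced_sym: "interlaced w a b = interlaced w b a"
  unfolding interlaced_def by (intro iffI; elim conjE exE; intro conjI; blast)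

lemma interlaced_set: "interlaced w a b \<Longrightarrow> a \<in> set w \<and> b \<in> set w"
  unfolding interlaced_def
proof (elim conjE exE)
  fix p q r t assume o: "p < q" "q < r" "r < t" "t < length w" and
    "w ! p = a \<and> w ! q = b \<and> w ! r = a \<and> w ! t = b \<or> w ! p = b \<and> w ! q = a \<and> w ! r = b \<and> w ! t = a"
  moreover have "p < length w" "q < length w" "r < length w" using o by auto
  ultimately show "a \<in> set w \<and> b \<in> set w" by (metis nth_mem)
qed

lemma K:
  assumes "w = u1 @ a # u2 @ a # u3" "a \<notin> set u1" "a \<notin> set u2" "a \<notin> set u3"
    "count_list w b = 0 \<or> count_list w b = 2" "b \<noteq> a"
  shows "interlaced w a b \<longleftrightarrow> count_list u2 b = 1"
proof
  assume "interlaced w a b"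
  then obtain p q r t where o: "p < q" "q < r" "r < t" "t < length w" and
    c: "(w!p = a \<and> w!q = b \<and> w!r = a \<and> w!t = b) \<or> (w!p = b \<and> w!q = a \<and> w!r = b \<and> w!t = a)"
    unfolding interlaced_def by blast
  note P = pos2[OF assms(1-4)]
  note N = nth3[OF assms(1)]
  have cw: "count_list w b = count_list u1 b + count_list u2 b + count_list u3 b"
    using assms(1,6) by simp
  from c show "count_list u2 b = 1"
  proof
    assume h: "w!p = a \<and> w!q = b \<and> w!r = a \<and> w!t = b"
    have "p = length u1" "r = length u1 + length u2 + 1" using P[of p] P[of r] h o by auto
    then have "b \<in> set u2" "b \<in> set u3" using N[of q] N[of t] h o by auto
    then have "count_list u2 b \<noteq> 0" "count_list u3 b \<noteq> 0" by (auto simp: count_list_0_iff)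
    then show ?thesis using cw assms(5) by linarith
  next
    assume h: "w!p = b \<and> w!q = a \<and> w!r = b \<and> w!t = a"
    have "q = length u1" "t = length u1 + length u2 + 1" using P[of q] P[of t] h o by auto
    then have "b \<in> set u1" "b \<in> set u2" using N[of p] N[of r] h o by auto
    then have "count_list u2 b \<noteq> 0" "count_list u1 b \<noteq> 0" by (auto simp: count_list_0_iff)
    then show ?thesis using cw assms(5) by linarith
  qed
next
  assume h: "count_list u2 b = 1"
  have cw: "count_list w b = count_list u1 b + count_list u2 b + count_list u3 b"
    using assms(1,6) by simp
  then have c2: "count_list u1 b + count_list u3 b = 1" using h assms(5) by linarith
  obtain v1 v2 where u2: "u2 = v1 @ b # v2" using h
    by (metis count_notin in_set_conv_decomp zero_neq_one)
  show "interlaced w a b"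
  proof (cases "count_list u3 b = 0")
    case True
    then have "b \<in> set u1" using c2 by (metis add.right_neutral count_notin zero_neq_one)
    then obtain v3 v4 where u1: "u1 = v3 @ b # v4" by (metis in_set_conv_decomp)
    let ?p = "length v3" let ?q = "length u1" let ?r = "length u1 + 1 + length v1"
    let ?t = "length u1 + length u2 + 1"
    have "w!?p = b" "w!?q = a" "w!?r = b" "w!?t = a" "?t < length w"
      using assms(1) u1 u2 by (simp_all add: nth_append)
    moreover have "?p < ?q" "?q < ?r" "?r < ?t" using u1 u2 by simp_all
    ultimately show ?thesis unfolding interlaced_def using assms(6)
      by (intro conjI exI[of _ ?p] exI[of _ ?q] exI[of _ ?r] exI[of _ ?t]) simp_all
  next
    case False
    then obtain v3 v4 where u3: "u3 = v3 @ b # v4" by (metis count_notin in_set_conv_decomp)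
    let ?p = "length u1" let ?q = "length u1 + 1 + length v1"
    let ?r = "length u1 + length u2 + 1" let ?t = "length u1 + length u2 + 2 + length v3"
    have "w!?p = a" "w!?q = b" "w!?r = a" "w!?t = b" "?t < length w"
      using assms(1) u3 u2 by (simp_all add: nth_append)
    moreover have "?p < ?q" "?q < ?r" "?r < ?t" using u3 u2 by simp_all
    ultimately show ?thesis unfolding interlaced_def using assms(6)
      by (intro conjI exI[of _ ?p] exI[of _ ?q] exI[of _ ?r] exI[of _ ?t]) simp_all
  qed
qed

definition seg :: "'a \<Rightarrow> 'a list \<Rightarrow> 'a list" where
  "seg a w = takeWhile (\<lambda>c. c \<noteq> a) (tl (dropWhile (\<lambda>c. c \<noteq> a) w))"

lemma dW_app[simp]: "a \<notin> set U \<Longrightarrow> dropWhile (\<lambda>c. c \<noteq> a) (U @ ys) = dropWhile (\<lambda>c. c \<noteq> a) ys"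
  by (rule dropWhile_append2) auto
lemma tW_app[simp]: "a \<notin> set U \<Longrightarrow> takeWhile (\<lambda>c. c \<noteq> a) (U @ ys) = U @ takeWhile (\<lambda>c. c \<noteq> a) ys"
  by (rule takeWhile_append2) auto

lemma seg_decomp: "a \<notin> set u1 \<Longrightarrow> a \<notin> set u2 \<Longrightarrow> seg a (u1 @ a # u2 @ a # u3) = u2"
  unfolding seg_def by simp

lemma gauss_cnt: "gauss_word w \<Longrightarrow> c \<in> set w \<Longrightarrow> count_list w c = 2"
  unfolding gauss_word_def by simp

lemma gauss_count: assumes "gauss_word w" shows "count_list w b = 0 \<or> count_list w b = 2"
proof (cases "b \<in> set w")
  case True then show ?thesis using gauss_cnt[OF assms] by simp
next
  case False then show ?thesis by simp
qed

lemma K':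
  assumes "gauss_word w" "a \<in> set w"
  shows "interlaced w a b \<longleftrightarrow> a \<noteq> b \<and> count_list (seg a w) b = 1"
proof -
  have "count_list w a = 2" by (rule gauss_cnt[OF assms])
  from decomp2[OF this] obtain C A B where d: "w = C @ a # A @ a # B" "a \<notin> set C" "a \<notin> set A" "a \<notin> set B"
    by iprover
  show ?thesis
  proof (cases "a = b")
    case True then show ?thesis unfolding interlaced_def by simp
  next
    case False
    have "seg a w = A" using d seg_decomp[of a C A B] by simp
    moreover have "interlaced w a b \<longleftrightarrow> count_list A b = 1"
      using K[OF d gauss_count[OF assms(1)], of b] False by simp
    ultimately show ?thesis using False by simp
  qed
qed

inductive cyc :: "'a list \<Rightarrow> 'a list \<Rightarrow> bool" where
  cyc_refl: "cyc u u"
| cyc_rot: "cyc u v \<Longrightarrow> cyc u (rotate1 v)"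
| cyc_rev: "cyc u v \<Longrightarrow> cyc u (rev v)"

lemma cyc_trans: "cyc v t \<Longrightarrow> cyc u v \<Longrightarrow> cyc u t"
  by (induction rule: cyc.induct) (auto intro: cyc.intros)

lemma cyc_rotate: "cyc u v \<Longrightarrow> cyc u (rotate k v)"
  by (induction k) (auto intro: cyc.intros)

lemma cyc_swap: "cyc (P @ Q) (Q @ P)"
proof -
  have "cyc (P @ Q) (rotate (length P) (P @ Q))" by (rule cyc_rotate[OF cyc_refl])
  then show ?thesis by (simp add: rotate_append)
qed

lemma count_rotate1[simp]: "count_list (rotate1 v) c = count_list v c"
  by (cases v) auto

lemma gauss_rotate1: "gauss_word (rotate1 v) = gauss_word v"
  unfolding gauss_word_def by simp

lemma gauss_rev: "gauss_word (rev v) = gauss_word v"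
  unfolding gauss_word_def by simp

lemma cyc_set: "cyc u v \<Longrightarrow> set v = set u"
  by (induction rule: cyc.induct) auto

lemma cyc_gauss: "cyc u v \<Longrightarrow> gauss_word v = gauss_word u"
  by (induction rule: cyc.induct) (auto simp: gauss_rotate1 gauss_rev)

lemma cyc_length: "cyc u v \<Longrightarrow> length v = length u"
  by (induction rule: cyc.induct) auto

lemma int_rot1:
  assumes g: "gauss_word v"
  shows "interlaced (rotate1 v) a b = interlaced v a b"
proof (cases "a \<in> set v")
  case False then show ?thesis using interlaced_set[of "rotate1 v" a b] interlaced_set[of v a b] by auto
next
  case True
  have "count_list v a = 2" by (rule gauss_cnt[OF g True])
  from decomp2[OF this] obtain C A B where d: "v = C @ a # A @ a # B" "a \<notin> set C" "a \<notin> set A" "a \<notin> set B"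
    by iprover
  show ?thesis
  proof (cases "a = b")
    case True then show ?thesis unfolding interlaced_def by simp
  next
    case ab: False
    have cb: "count_list v b = 0 \<or> count_list v b = 2" by (rule gauss_count[OF g])
    have cb': "count_list (rotate1 v) b = 0 \<or> count_list (rotate1 v) b = 2" using cb by simp
    have I1: "interlaced v a b \<longleftrightarrow> count_list A b = 1"
      using K[OF d cb] ab by simp
    show ?thesis
    proof (cases C)
      case Nil
      have r: "rotate1 v = A @ a # B @ a # []" using d(1) Nil by simp
      have "interlaced (rotate1 v) a b \<longleftrightarrow> count_list B b = 1"
        using K[OF r d(3,4) _ cb'] ab by simp
      moreover have "count_list v b = count_list A b + count_list B b" using d(1) Nil ab by simp
      ultimately show ?thesis using I1 cb by linarith
    next
      case (Cons h C')
      have r: "rotate1 v = C' @ a # A @ a # (B @ [h])" using d(1) Cons by simp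
      have "a \<noteq> h" using d(2) Cons by auto
      then have "interlaced (rotate1 v) a b \<longleftrightarrow> count_list A b = 1"
        using K[OF r _ d(3) _ cb'] ab d(2,4) Cons by simp
      then show ?thesis using I1 by simp
    qed
  qed
qed

lemma int_rev:
  assumes g: "gauss_word v"
  shows "interlaced (rev v) a b = interlaced v a b"
proof (cases "a \<in> set v")
  case False then show ?thesis using interlaced_set[of "rev v" a b] interlaced_set[of v a b] by auto
next
  case True
  have "count_list v a = 2" by (rule gauss_cnt[OF g True])
  from decomp2[OF this] obtain C A B where d: "v = C @ a # A @ a # B" "a \<notin> set C" "a \<notin> set A" "a \<notin> set B"
    by iprover
  show ?thesis
  proof (cases "a = b")
    case True then show ?thesis unfolding interlaced_def by simp
  next
    case ab: False
    have cb: "count_list v b = 0 \<or> count_list v b = 2" by (rule gauss_count[OF g])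
    have cb': "count_list (rev v) b = 0 \<or> count_list (rev v) b = 2" using cb by simp
    have I1: "interlaced v a b \<longleftrightarrow> count_list A b = 1"
      using K[OF d cb] ab by simp
    have r: "rev v = rev B @ a # rev A @ a # rev C" using d(1) by simp
    have "interlaced (rev v) a b \<longleftrightarrow> count_list (rev A) b = 1"
      using K[OF r _ _ _ cb'] ab d by simp
    then show ?thesis using I1 by simp
  qed
qed

lemma cyc_interlaced: "cyc u v \<Longrightarrow> gauss_word u \<Longrightarrow> interlaced v a b = interlaced u a b"
proof (induction rule: cyc.induct)
  case (cyc_refl u) then show ?case by simp
next
  case (cyc_rot u v) then show ?case using int_rot1[of v a b] cyc_gauss by blast
next
  case (cyc_rev u v) then show ?case using int_rev[of v a b] cyc_gauss by blast
qed

lemma cyc_reducible: assumes "cyc u v" "gauss_word u" shows "reducible v = reducible u"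
  unfolding reducible_def using cyc_set[OF assms(1)] cyc_interlaced[OF assms] by simp

lemma splice_decomp:
  assumes "gauss_word v" "p \<in> set v"
  obtains C A B where "v = C @ p # A @ p # B" "p \<notin> set C" "p \<notin> set A" "p \<notin> set B"
    "splice v p = rev A @ B @ C"
proof -
  have "count_list v p = 2" by (rule gauss_cnt[OF assms])
  from decomp2[OF this] obtain C A B where d: "v = C @ p # A @ p # B" "p \<notin> set C" "p \<notin> set A" "p \<notin> set B"
    by iprover
  show ?thesis using that[OF d splice_formula[OF d]] .
qed

lemma splice_rot1:
  assumes "gauss_word v" "p \<in> set v"
  shows "splice (rotate1 v) p = splice v p \<or> splice (rotate1 v) p = rev (splice v p)"
proof -
  obtain C A B where d: "v = C @ p # A @ p # B" "p \<notin> set C" "p \<notin> set A" "p \<notin> set B"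
    "splice v p = rev A @ B @ C" using splice_decomp[OF assms] by blast
  show ?thesis
  proof (cases C)
    case Nil
    have r: "rotate1 v = A @ p # B @ p # []" using d(1) Nil by simp
    have "splice (rotate1 v) p = rev B @ [] @ A" by (rule splice_formula[OF r d(3,4)]) simp
    then show ?thesis using d(5) Nil by simp
  next
    case (Cons h C')
    have r: "rotate1 v = C' @ p # A @ p # (B @ [h])" using d(1) Cons by simp
    have "splice (rotate1 v) p = rev A @ (B @ [h]) @ C'"
      by (rule splice_formula[OF r]) (use d Cons in auto)
    then show ?thesis using d(5) Cons by simp
  qed
qed

lemma splice_rev:
  assumes "gauss_word v" "p \<in> set v"
  shows "cyc (splice v p) (splice (rev v) p)"
proof -
  obtain C A B where d: "v = C @ p # A @ p # B" "p \<notin> set C" "p \<notin> set A" "p \<notin> set B"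
    "splice v p = rev A @ B @ C" using splice_decomp[OF assms] by blast
  have r: "rev v = rev B @ p # rev A @ p # rev C" using d(1) by simp
  have s: "splice (rev v) p = A @ rev C @ rev B"
    using splice_formula[OF r] d by simp
  have "cyc (splice v p) (rev (splice v p))" by (rule cyc_rev[OF cyc_refl])
  moreover have "rev (splice v p) = (rev C @ rev B) @ A" using d(5) by simp
  ultimately have "cyc (splice v p) ((rev C @ rev B) @ A)" by simp
  then show ?thesis using s cyc_trans[OF cyc_swap] by fastforce
qed

lemma cyc_splice: "cyc u v \<Longrightarrow> gauss_word u \<Longrightarrow> p \<in> set u \<Longrightarrow> cyc (splice u p) (splice v p)"
proof (induction rule: cyc.induct)
  case (cyc_refl u) show ?case by (simp add: cyc.cyc_refl)
next
  case (cyc_rot u v)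
  have g: "gauss_word v" "p \<in> set v" using cyc_rot cyc_gauss cyc_set by blast+
  show ?case using splice_rot1[OF g] cyc_rot cyc.cyc_rev by fastforce
next
  case (cyc_rev u v)
  have g: "gauss_word v" "p \<in> set v" using cyc_rev cyc_gauss cyc_set by blast+
  show ?case using splice_rev[OF g] cyc_rev cyc_trans by blast
qed

lemma gauss_splice:
  assumes "gauss_word v" "p \<in> set v" "splice v p \<noteq> []"
  shows "gauss_word (splice v p)" "set (splice v p) = set v - {p}"
proof -
  obtain C A B where d: "v = C @ p # A @ p # B" "p \<notin> set C" "p \<notin> set A" "p \<notin> set B"
    "splice v p = rev A @ B @ C" using splice_decomp[OF assms(1,2)] by blast
  show "set (splice v p) = set v - {p}" using d by auto
  show "gauss_word (splice v p)" unfolding gauss_word_def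
  proof (intro conjI ballI)
    show "splice v p \<noteq> []" by fact
    fix c assume c: "c \<in> set (splice v p)"
    then have "c \<noteq> p" "c \<in> set v" using d by auto
    then have "count_list v c = 2" using gauss_cnt[OF assms(1)] by blast
    then show "count_list (splice v p) c = 2" using d \<open>c \<noteq> p\<close> by simp
  qed
qed

lemma red_le: "splice_reach k w w' \<Longrightarrow> reducible w' \<Longrightarrow> k \<le> 3 \<Longrightarrow> reductivity w \<le> 3"
proof -
  assume a: "splice_reach k w w'" "reducible w'" "k \<le> 3"
  have "reductivity w \<le> enat k" unfolding reductivity_def
    by (rule INF_lower) (use a in blast)
  also have "enat k \<le> 3" using a(3) by (simp add: numeral_eq_enat)
  finally show ?thesis .
qed

lemma isolated_red:
  assumes "w = u @ z # m @ z # v" "z \<notin> set u" "z \<notin> set m" "z \<notin> set v"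
    "\<forall>c\<in>set m. c \<notin> set u \<and> c \<notin> set v"
  shows "reducible w"
  unfolding reducible_def
proof
  show "z \<in> set w" using assms(1) by simp
  show "\<forall>d\<in>set w. \<not> interlaced w z d" using isolated[OF assms] by blast
qed

lemma final:
  assumes g: "gauss_word w" and c: "cyc w N"
    and N: "N = [x,y] @ W1 @ [x,z] @ W2 @ [z,y] @ W3"
    and dist: "x \<noteq> y" "y \<noteq> z" "x \<noteq> z"
    and nin: "x \<notin> set W1" "x \<notin> set W2" "x \<notin> set W3"
      "y \<notin> set W1" "y \<notin> set W2" "y \<notin> set W3"
      "z \<notin> set W1" "z \<notin> set W2" "z \<notin> set W3"
  shows "reductivity w \<le> 3"
proof -
  have gN: "gauss_word N" using cyc_gauss[OF c] g by simp
  have xw: "x \<in> set w" using cyc_set[OF c] N by auto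
  have S1: "splice N x = rev W1 @ [y,z] @ W2 @ [z,y] @ W3"
  proof -
    have "N = [] @ x # (y # W1) @ x # (z # W2 @ [z,y] @ W3)" using N by simp
    from splice_formula[OF this] show ?thesis using nin dist by simp
  qed
  define U where "U = W3 @ rev W1"
  define N1 where "N1 = [y,z] @ W2 @ [z,y] @ U"
  have "cyc (splice w x) (splice N x)" by (rule cyc_splice[OF c g xw])
  moreover have "cyc (splice N x) N1" unfolding S1 N1_def U_def
    using cyc_swap[of "rev W1" "[y,z] @ W2 @ [z,y] @ W3"] by simp
  ultimately have c1: "cyc (splice w x) N1" using cyc_trans by blast
  have "splice w x \<noteq> []" using cyc_length[OF c1] N1_def by auto
  then have g1: "gauss_word (splice w x)" using gauss_splice[OF g xw] by blast
  have gN1: "gauss_word N1" using cyc_gauss[OF c1] g1 by simp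
  have set1: "set (splice w x) = set N1" using cyc_set[OF c1] by simp
  have nU: "y \<notin> set U" "z \<notin> set U" "x \<notin> set U" using nin unfolding U_def by auto
  show ?thesis
  proof (cases "\<exists>c\<in>set W2. c \<in> set U")
    case False
    have "N1 = [y] @ z # W2 @ z # (y # U)" unfolding N1_def by simp
    then have "reducible N1" by (rule isolated_red) (use False nin nU dist in auto)
    then have r1: "reducible (splice w x)" using cyc_reducible[OF c1 g1] by simp
    have "splice_reach (Suc 0) w (splice w x)" using xw by auto
    then show ?thesis using red_le r1 by fastforce
  next
    case True
    then obtain c where cW: "c \<in> set W2" "c \<in> set U" by blast
    have cne: "c \<noteq> x" "c \<noteq> y" "c \<noteq> z" using cW nin by auto
    have cN1: "c \<in> set N1" using cW unfolding N1_def by simp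
    have "count_list N1 c = 2" by (rule gauss_cnt[OF gN1 cN1])
    then have cnt: "count_list W2 c + count_list U c = 2" unfolding N1_def using cne by simp
    have "count_list W2 c \<noteq> 0" "count_list U c \<noteq> 0" using cW by (auto simp: count_list_0_iff)
    then have c1s: "count_list W2 c = 1" "count_list U c = 1" using cnt by linarith+
    obtain P Q where PQ: "W2 = P @ c # Q" "c \<notin> set P" using split_list_first[OF cW(1)] by blast
    obtain R S where RS: "U = R @ c # S" "c \<notin> set R" using split_list_first[OF cW(2)] by blast
    have "c \<notin> set Q" using c1s(1) PQ by (simp add: count_list_0_iff[symmetric])
    moreover have "c \<notin> set S" using c1s(2) RS by (simp add: count_list_0_iff[symmetric])
    ultimately have cn: "c \<notin> set P" "c \<notin> set Q" "c \<notin> set R" "c \<notin> set S" using PQ RS by auto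
    have yn: "y \<notin> set P" "y \<notin> set Q" "y \<notin> set R" "y \<notin> set S"
      "z \<notin> set P" "z \<notin> set Q" "z \<notin> set R" "z \<notin> set S"
      using nin nU PQ RS by auto
    define M2 where "M2 = rev R @ [y,z] @ rev Q @ S @ [y,z] @ P"
    have S2: "splice N1 c = M2"
    proof -
      have "N1 = ([y,z] @ P) @ c # (Q @ [z,y] @ R) @ c # S" unfolding N1_def using PQ RS by simp
      from splice_formula[OF this] show ?thesis unfolding M2_def using cn cne by simp
    qed
    have c2: "cyc (splice (splice w x) c) M2"
      using cyc_splice[OF c1 g1, of c] cN1 set1 S2 by simp
    have "splice (splice w x) c \<noteq> []" using cyc_length[OF c2] M2_def by auto
    then have g2: "gauss_word (splice (splice w x) c)" using gauss_splice[OF g1] cN1 set1 by blast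
    have set2: "set (splice (splice w x) c) = set M2" using cyc_set[OF c2] by simp
    define M3 where "M3 = rev S @ Q @ [z] @ z # P @ rev R"
    have S3: "splice M2 y = M3"
    proof -
      have "M2 = rev R @ y # (z # rev Q @ S) @ y # (z # P)" unfolding M2_def by simp
      from splice_formula[OF this] show ?thesis unfolding M3_def using yn dist by simp
    qed
    have yM2: "y \<in> set M2" unfolding M2_def by simp
    have c3: "cyc (splice (splice (splice w x) c) y) M3"
      using cyc_splice[OF c2 g2, of y] yM2 set2 S3 by simp
    have "splice (splice (splice w x) c) y \<noteq> []" using cyc_length[OF c3] M3_def by auto
    then have g3: "gauss_word (splice (splice (splice w x) c) y)"
      using gauss_splice[OF g2] yM2 set2 by blast
    have "M3 = (rev S @ Q) @ z # [] @ z # (P @ rev R)" unfolding M3_def by simp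
    then have "reducible M3" by (rule isolated_red) (use yn in auto)
    then have r3: "reducible (splice (splice (splice w x) c) y)" using cyc_reducible[OF c3 g3] by simp
    have "splice_reach (Suc (Suc (Suc 0))) w (splice (splice (splice w x) c) y)"
    proof -
      have i: "c \<in> set (splice w x)" "y \<in> set (splice (splice w x) c)" using cN1 set1 yM2 set2 by simp_all
      show ?thesis unfolding splice_reach.simps
        by (rule bexI[where x=x], rule bexI[where x=c], rule bexI[where x=y]) (use i xw in simp_all)
    qed
    then show ?thesis using red_le r3 by fastforce
  qed
qed

lemma partner_props:
  assumes g: "gauss_word w" and k: "k < length w"
  shows "partner w k < length w \<and> partner w k \<noteq> k \<and> w ! partner w k = w ! k \<and>
    (\<forall>j. j < length w \<and> j \<noteq> k \<and> w ! j = w ! k \<longrightarrow> j = partner w k)"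
proof -
  obtain c where c: "w ! k = c" by simp
  have "c \<in> set w" using k c by (metis nth_mem)
  then have "count_list w c = 2" by (rule gauss_cnt[OF g])
  from decomp2[OF this] obtain C A B where d: "w = C @ c # A @ c # B" "c \<notin> set C" "c \<notin> set A" "c \<notin> set B"
    by iprover
  note P = pos2[OF d]
  have kk: "k = length C \<or> k = length C + length A + 1" using P[OF k] c by simp
  have l: "length C + length A + 1 < length w" "w ! length C = c" "w ! (length C + length A + 1) = c"
    using d(1) by (simp_all add: nth_append)
  define j where "j = (if k = length C then length C + length A + 1 else length C)"
  have j: "j < length w" "j \<noteq> k" "w ! j = c" using kk l unfolding j_def by auto
  have u: "i = j" if asm: "i < length w" "i \<noteq> k" "w ! i = c" for i
  proof -
    have i1: "i = length C \<or> i = length C + length A + 1" using P[OF asm(1,3)] .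
    show "i = j" using i1 kk asm(2) unfolding j_def by (cases "k = length C") simp_all
  qed
  have pj: "partner w k = j" unfolding partner_def
  proof (rule the_equality)
    show "j < length w \<and> j \<noteq> k \<and> w ! j = w ! k" using j c by simp
    fix i assume "i < length w \<and> i \<noteq> k \<and> w ! i = w ! k"
    then show "i = j" using c by (intro u) auto
  qed
  show ?thesis unfolding pj c using j by (auto intro: u)
qed

lemma partner_inv:
  assumes g: "gauss_word w" and k: "k < length w"
  shows "partner w (partner w k) = k"
proof -
  have p: "partner w k < length w" "partner w k \<noteq> k" "w ! partner w k = w ! k"
    using partner_props[OF g k] by auto
  have "\<forall>j. j < length w \<and> j \<noteq> partner w k \<and> w ! j = w ! partner w k \<longrightarrow> j = partner w (partner w k)"
    by (rule conjunct2[OF conjunct2[OF conjunct2[OF partner_props[OF g p(1)]]]])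
  from spec[OF this, of k] show ?thesis using p k by auto
qed

lemma rot_fst:
  assumes g: "gauss_word w" and k: "k < length w"
  shows "fst (rot w s (k, b)) = partner w k"
proof -
  have "partner w k \<noteq> k" using partner_props[OF g k] by simp
  then show ?thesis unfolding rot_def Let_def by (auto simp: min_def max_def)
qed

lemma rot_inj:
  assumes g: "gauss_word w" and k: "k < length w" and k': "k' < length w"
    and e: "rot w s (k, b) = rot w s (k', b')"
  shows "k = k' \<and> b = b'"
proof -
  have "partner w k = partner w k'" using rot_fst[OF g k, of s b] rot_fst[OF g k', of s b'] e by simp
  then have kk: "k = k'" using partner_inv[OF g k] partner_inv[OF g k'] by metis
  have "partner w k \<noteq> k" using partner_props[OF g k] by simp
  then have "b = b'" using e unfolding kk rot_def Let_def
    by (cases b; cases b'; cases "s (w ! k')"; auto simp: min_def max_def split: if_splits)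
  then show ?thesis using kk by simp
qed

lemma suc_mod: "k < n \<Longrightarrow> Suc k mod n = (if Suc k = n then 0 else Suc k)"
  by (cases "Suc k = n") auto

lemma ef_true: "fst (edge_flip w (k, True)) = Suc k mod length w"
  by simp

lemma ef_false:
  assumes k: "k < length w"
  shows "k = Suc (fst (edge_flip w (k, False))) mod length w"
proof -
  have n: "length w > 0" using le_less_trans[OF le0 k] .
  show ?thesis
  proof (cases k)
    case 0 then show ?thesis using n by (simp add: mod_Suc)
  next
    case (Suc k0)
    then have "k + length w - 1 = k0 + length w" by simp
    then have "(k + length w - 1) mod length w = k0" using k Suc by simp
    then show ?thesis using Suc k by simp
  qed
qed

lemma ef_lt: assumes "k < length w" shows "fst (edge_flip w (k, b)) < length w"
proof -
  have n: "0 < length w" using le_less_trans[OF le0 assms] .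
  then show ?thesis by (cases b) simp_all
qed

lemma ef_inj:
  assumes k: "k < length w" and k': "k' < length w"
    and e: "edge_flip w (k, b) = edge_flip w (k', b')"
  shows "k = k' \<and> b = b'"
proof -
  have bb: "b = b'" using e by (cases b; cases b') auto
  have "k = k'"
  proof (cases b)
    case True
    then have "Suc k mod length w = Suc k' mod length w" using e bb by simp
    then show ?thesis using suc_mod[OF k] suc_mod[OF k'] k k' by (auto split: if_splits)
  next
    case False
    have e': "fst (edge_flip w (k, False)) = fst (edge_flip w (k', False))" using e bb False by simp
    have "k = Suc (fst (edge_flip w (k, False))) mod length w" by (rule ef_false[OF k])
    also have "\<dots> = Suc (fst (edge_flip w (k', False))) mod length w" by (simp only: e')
    also have "\<dots> = k'" by (rule ef_false[OF k', symmetric])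
    finally show ?thesis .
  qed
  then show ?thesis using bb by simp
qed

lemma cfg:
  assumes g: "gauss_word w" and c: "cyc w w'"
    and w': "w' = [a,b] @ U1 @ [p1,q1] @ U2 @ [p2,q2] @ U3"
    and dist: "a \<noteq> b" "b \<noteq> d" "a \<noteq> d"
    and blocks: "(p1 = a \<and> q1 = d \<or> p1 = d \<and> q1 = a) \<and> (p2 = b \<and> q2 = d \<or> p2 = d \<and> q2 = b) \<or>
                 (p1 = b \<and> q1 = d \<or> p1 = d \<and> q1 = b) \<and> (p2 = a \<and> q2 = d \<or> p2 = d \<and> q2 = a)"
    and tB: "(interlaced w a b \<and> \<not> interlaced w b d \<and> \<not> interlaced w a d) \<or>
             (\<not> interlaced w a b \<and> interlaced w b d \<and> \<not> interlaced w a d) \<or>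
             (\<not> interlaced w a b \<and> \<not> interlaced w b d \<and> interlaced w a d)"
  shows "reductivity w \<le> 3"
proof -
  have g': "gauss_word w'" using cyc_gauss[OF c] g by simp
  have I: "interlaced w u v = interlaced w' u v" for u v using cyc_interlaced[OF c g] by simp
  have inw: "a \<in> set w'" "b \<in> set w'" "d \<in> set w'" using w' blocks by auto
  have ca: "count_list w' a = 2" "count_list w' b = 2" "count_list w' d = 2"
    using gauss_cnt[OF g'] inw by auto
  have Ia: "interlaced w a v \<longleftrightarrow> a \<noteq> v \<and> count_list (seg a w') v = 1" for v
    using K'[OF g' inw(1)] I by simp
  have Ib: "interlaced w b v \<longleftrightarrow> b \<noteq> v \<and> count_list (seg b w') v = 1" for v
    using K'[OF g' inw(2)] I by simp
  from blocks consider
      (c1) "p1 = a" "q1 = d" "p2 = b" "q2 = d"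
    | (c2) "p1 = a" "q1 = d" "p2 = d" "q2 = b"
    | (c3) "p1 = d" "q1 = a" "p2 = b" "q2 = d"
    | (c4) "p1 = d" "q1 = a" "p2 = d" "q2 = b"
    | (c5) "p1 = b" "q1 = d" "p2 = a" "q2 = d"
    | (c6) "p1 = b" "q1 = d" "p2 = d" "q2 = a"
    | (c7) "p1 = d" "q1 = b" "p2 = a" "q2 = d"
    | (c8) "p1 = d" "q1 = b" "p2 = d" "q2 = a"
    by (elim disjE conjE) simp_all
  then show ?thesis
  proof cases
    case c1
    have W: "w' = a # b # U1 @ a # d # U2 @ b # d # U3" using w' c1 by simp
    have nU: "a \<notin> set U1" "a \<notin> set U2" "a \<notin> set U3" "b \<notin> set U1" "b \<notin> set U2" "b \<notin> set U3"
       "d \<notin> set U1" "d \<notin> set U2" "d \<notin> set U3" using ca dist unfolding W by (simp_all add: count_list_0_iff)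
    have "interlaced w a b" "interlaced w b d" using Ia[of b] Ib[of d] dist nU unfolding W by (simp_all add: seg_def)
    then show ?thesis using tB by simp
  next
    case c2
    have W: "w' = [a,b] @ U1 @ [a,d] @ U2 @ [d,b] @ U3" using w' c2 by simp
    have nU: "a \<notin> set U1" "a \<notin> set U2" "a \<notin> set U3" "b \<notin> set U1" "b \<notin> set U2" "b \<notin> set U3"
       "d \<notin> set U1" "d \<notin> set U2" "d \<notin> set U3" using ca dist unfolding W by (simp_all add: count_list_0_iff)
    have "cyc w ([a,b] @ U1 @ [a,d] @ U2 @ [d,b] @ U3)" using c W by simp
    from final[OF g this] show ?thesis using dist nU by simp
  next
    case c3
    have W: "w' = a # b # U1 @ d # a # U2 @ b # d # U3" using w' c3 by simp
    have nU: "a \<notin> set U1" "a \<notin> set U2" "a \<notin> set U3" "b \<notin> set U1" "b \<notin> set U2" "b \<notin> set U3"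
       "d \<notin> set U1" "d \<notin> set U2" "d \<notin> set U3" using ca dist unfolding W by (simp_all add: count_list_0_iff)
    have "interlaced w a b" "interlaced w b d" using Ia[of b] Ib[of d] dist nU unfolding W by (simp_all add: seg_def)
    then show ?thesis using tB by simp
  next
    case c4
    have W: "w' = a # b # U1 @ d # a # U2 @ d # b # U3" using w' c4 by simp
    have nU: "a \<notin> set U1" "a \<notin> set U2" "a \<notin> set U3" "b \<notin> set U1" "b \<notin> set U2" "b \<notin> set U3"
       "d \<notin> set U1" "d \<notin> set U2" "d \<notin> set U3" using ca dist unfolding W by (simp_all add: count_list_0_iff)
    have "interlaced w a b" "interlaced w a d" using Ia[of b] Ia[of d] dist nU unfolding W by (simp_all add: seg_def)
    then show ?thesis using tB by simp
  next
    case c5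
    have W: "w' = [a,b] @ U1 @ [b,d] @ U2 @ [a,d] @ U3" using w' c5 by simp
    have nU: "a \<notin> set U1" "a \<notin> set U2" "a \<notin> set U3" "b \<notin> set U1" "b \<notin> set U2" "b \<notin> set U3"
       "d \<notin> set U1" "d \<notin> set U2" "d \<notin> set U3" using ca dist unfolding W by (simp_all add: count_list_0_iff)
    have "cyc w ([a,d] @ U3 @ [a,b] @ U1 @ [b,d] @ U2)"
      using cyc_trans[OF cyc_swap[of "[a,b] @ U1 @ [b,d] @ U2" "[a,d] @ U3"]] c W by simp
    from final[OF g this] show ?thesis using dist nU by simp
  next
    case c6
    have W: "w' = a # b # U1 @ b # d # U2 @ d # a # U3" using w' c6 by simp
    have nU: "a \<notin> set U1" "a \<notin> set U2" "a \<notin> set U3" "b \<notin> set U1" "b \<notin> set U2" "b \<notin> set U3"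
       "d \<notin> set U1" "d \<notin> set U2" "d \<notin> set U3" using ca dist unfolding W by (simp_all add: count_list_0_iff)
    have "\<not> interlaced w a b" "\<not> interlaced w a d" "\<not> interlaced w b d"
      using Ia[of b] Ia[of d] Ib[of d] dist nU unfolding W by (simp_all add: seg_def)
    then show ?thesis using tB by simp
  next
    case c7
    have W: "w' = a # b # U1 @ d # b # U2 @ a # d # U3" using w' c7 by simp
    have nU: "a \<notin> set U1" "a \<notin> set U2" "a \<notin> set U3" "b \<notin> set U1" "b \<notin> set U2" "b \<notin> set U3"
       "d \<notin> set U1" "d \<notin> set U2" "d \<notin> set U3" using ca dist unfolding W by (simp_all add: count_list_0_iff)
    have "interlaced w a d" "interlaced w b d" using Ia[of d] Ib[of d] dist nU unfolding W by (simp_all add: seg_def)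
    then show ?thesis using tB by simp
  next
    case c8
    have W: "w' = [a,b] @ U1 @ [d,b] @ U2 @ [d,a] @ U3" using w' c8 by simp
    have nU: "a \<notin> set U1" "a \<notin> set U2" "a \<notin> set U3" "b \<notin> set U1" "b \<notin> set U2" "b \<notin> set U3"
       "d \<notin> set U1" "d \<notin> set U2" "d \<notin> set U3" using ca dist unfolding W by (simp_all add: count_list_0_iff)
    have "cyc w ([d,b] @ U2 @ [d,a] @ U3 @ [a,b] @ U1)"
      using cyc_trans[OF cyc_swap[of "[a,b] @ U1" "[d,b] @ U2 @ [d,a] @ U3"]] c W by simp
    from final[OF g this] show ?thesis using dist nU by simp
  qed
qed

lemma split2:
  assumes "i + 1 < length xs"
  shows "xs = take i xs @ [xs!i, xs!(i+1)] @ drop (i+2) xs"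
proof -
  have "drop i xs = xs!i # xs!(i+1) # drop (i+2) xs"
    using assms by (simp add: Cons_nth_drop_Suc)
  then show ?thesis by (metis append_Cons append_Nil append_take_drop_id)
qed

lemma split5:
  assumes "2 \<le> i" "i + 1 < j" "j + 1 < length xs"
  shows "\<exists>U1 U2 U3. xs = [xs!0, xs!1] @ U1 @ [xs!i, xs!(i+1)] @ U2 @ [xs!j, xs!(j+1)] @ U3"
proof -
  define T where "T = take j xs"
  have x: "xs = T @ [xs!j, xs!(j+1)] @ drop (j+2) xs" unfolding T_def by (rule split2[OF assms(3)])
  have lT: "length T = j" unfolding T_def using assms by simp
  have T: "T = take i T @ [T!i, T!(i+1)] @ drop (i+2) T" by (rule split2) (use lT assms in simp)
  have Ti: "T!i = xs!i" "T!(i+1) = xs!(i+1)" unfolding T_def using assms by simp_all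
  define V where "V = take i T"
  have lV: "length V = i" unfolding V_def using lT assms by simp
  have V: "V = take 0 V @ [V!0, V!(0+1)] @ drop (0+2) V" by (rule split2) (use lV assms in simp)
  have Vi: "V!0 = xs!0" "V!1 = xs!1" unfolding V_def T_def using assms by simp_all
  have xx: "xs = [xs!0, xs!1] @ drop 2 V @ [xs!i, xs!(i+1)] @ drop (i+2) T @ [xs!j, xs!(j+1)] @ drop (j+2) xs"
  proof -
    have "xs = (V @ [T!i, T!(i+1)] @ drop (i+2) T) @ [xs!j, xs!(j+1)] @ drop (j+2) xs"
      using x T unfolding V_def by simp
    also have "V = [xs!0, xs!1] @ drop 2 V" using V Vi by (simp add: numeral_2_eq_2)
    finally show ?thesis using Ti by simp
  qed
  show ?thesis by (rule exI, rule exI, rule exI, rule xx)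
qed

lemma rot_nth:
  assumes p: "p < length w" and s: "s < length w"
  shows "rotate s w ! ((p + (length w - s)) mod length w) = w ! p"
proof -
  let ?n = "length w"
  have n: "0 < ?n" using le_less_trans[OF le0 p] .
  have "rotate s w ! ((p + (?n - s)) mod ?n) = w ! ((s + (p + (?n - s)) mod ?n) mod ?n)"
    by (rule nth_rotate) (use n in simp)
  also have "(s + (p + (?n - s)) mod ?n) mod ?n = (s + (p + (?n - s))) mod ?n" by (simp add: mod_add_right_eq)
  also have "s + (p + (?n - s)) = p + ?n" using s by simp
  also have "(p + ?n) mod ?n = p" using p by simp
  finally show ?thesis .
qed

lemma tr_suc: "((Suc (p::nat) mod n) + (n - s)) mod n = Suc ((p + (n - s)) mod n) mod n"
proof -
  have "((Suc p mod n) + (n - s)) mod n = (Suc p + (n - s)) mod n" by (rule mod_add_left_eq)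
  also have "Suc p + (n - s) = Suc (p + (n - s))" by simp
  also have "Suc (p + (n - s)) mod n = Suc ((p + (n - s)) mod n) mod n" by (rule mod_Suc_eq[symmetric])
  finally show ?thesis .
qed

lemma tr_back:
  fixes p n s :: nat
  assumes "p < n" "s < n"
  shows "(s + (p + (n - s)) mod n) mod n = p"
proof -
  have "(s + (p + (n - s)) mod n) mod n = (s + (p + (n - s))) mod n" by (rule mod_add_right_eq)
  also have "s + (p + (n - s)) = p + n" using assms by simp
  also have "(p + n) mod n = p" using assms by simp
  finally show ?thesis .
qed

lemma tr_inj:
  fixes p q n s :: nat
  assumes "p < n" "q < n" "s < n" "(p + (n - s)) mod n = (q + (n - s)) mod n"
  shows "p = q"
proof -
  have "p = (s + (p + (n - s)) mod n) mod n" by (rule tr_back[OF assms(1,3), symmetric])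
  also have "\<dots> = (s + (q + (n - s)) mod n) mod n" by (simp only: assms(4))
  also have "\<dots> = q" by (rule tr_back[OF assms(2,3)])
  finally show ?thesis .
qed

definition tyB :: "'a list \<Rightarrow> 'a \<Rightarrow> 'a \<Rightarrow> 'a \<Rightarrow> bool" where
  "tyB w x y z \<longleftrightarrow> (interlaced w x y \<and> \<not> interlaced w y z \<and> \<not> interlaced w z x) \<or>
      (\<not> interlaced w x y \<and> interlaced w y z \<and> \<not> interlaced w z x) \<or>
      (\<not> interlaced w x y \<and> \<not> interlaced w y z \<and> interlaced w z x)"

lemma tyB_12: "tyB w x y z \<Longrightarrow> tyB w y x z"
  unfolding tyB_def using interlaced_sym[of w] by metis
lemma tyB_23: "tyB w x y z \<Longrightarrow> tyB w x z y"
  unfolding tyB_def using interlaced_sym[of w] by metis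
lemma tyB_rot: "tyB w x y z \<Longrightarrow> tyB w y z x"
  unfolding tyB_def using interlaced_sym[of w] by metis

lemma tyB_perm:
  assumes t: "tyB w x y z" and e: "{a,b,d} = {x,y,z}" and dd: "a \<noteq> b" "b \<noteq> d" "a \<noteq> d"
  shows "tyB w a b d"
proof -
  have m: "a \<in> {x,y,z}" "b \<in> {x,y,z}" "d \<in> {x,y,z}" by (simp_all add: e[symmetric])
  have A: "a = x \<or> a = y \<or> a = z" "b = x \<or> b = y \<or> b = z" "d = x \<or> d = y \<or> d = z"
    using m by simp_all
  have t2: "tyB w y z x" using tyB_rot[OF t] .
  have t3: "tyB w z x y" using tyB_rot[OF t2] .
  have t4: "tyB w x z y" using tyB_23[OF t] .
  have t5: "tyB w y x z" using tyB_12[OF t] .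
  have t6: "tyB w z y x" using tyB_12[OF t2] .
  from A show ?thesis
    by (elim disjE) (use dd t t2 t3 t4 t5 t6 in simp_all)
qed

lemma assemble:
  assumes g: "gauss_word w" and n: "n = length w"
    and st: "s0 < n" "s1 < n" "s2 < n"
    and dp: "distinct [s0, Suc s0 mod n, s1, Suc s1 mod n, s2, Suc s2 mod n]"
    and cd: "c0 \<noteq> c1" "c1 \<noteq> c2" "c0 \<noteq> c2"
    and b0: "w!s0 = c0 \<and> w!(Suc s0 mod n) = c1 \<or> w!s0 = c1 \<and> w!(Suc s0 mod n) = c0"
    and b1: "w!s1 = c1 \<and> w!(Suc s1 mod n) = c2 \<or> w!s1 = c2 \<and> w!(Suc s1 mod n) = c1"
    and b2: "w!s2 = c2 \<and> w!(Suc s2 mod n) = c0 \<or> w!s2 = c0 \<and> w!(Suc s2 mod n) = c2"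
    and t: "tyB w c0 c1 c2"
  shows "reductivity w \<le> 3"
proof -
  define tr where "tr p = (p + (n - s0)) mod n" for p
  define w' where "w' = rotate s0 w"
  have cw: "cyc w w'" unfolding w'_def by (rule cyc_rotate[OF cyc_refl])
  have lw: "length w' = n" unfolding w'_def n by simp
  have n6: "6 \<le> n"
  proof -
    have "set [s0, Suc s0 mod n, s1, Suc s1 mod n, s2, Suc s2 mod n] \<subseteq> {..<n}"
      using st by auto
    then have "card (set [s0, Suc s0 mod n, s1, Suc s1 mod n, s2, Suc s2 mod n]) \<le> n"
      by (metis card_lessThan card_mono finite_lessThan)
    moreover have "card (set [s0, Suc s0 mod n, s1, Suc s1 mod n, s2, Suc s2 mod n]) = 6"
      using distinct_card[OF dp] by simp
    ultimately show ?thesis by simp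
  qed
  have smn: "Suc p mod n < n" for p using n6 by simp
  have trw: "w' ! tr p = w ! p" if "p < n" for p
    unfolding w'_def tr_def using rot_nth[of p w s0] that st n by simp
  have trs: "tr (Suc p mod n) = Suc (tr p) mod n" for p unfolding tr_def by (rule tr_suc)
  have trlt: "tr p < n" for p unfolding tr_def using n6 by simp
  have trinj: "tr p \<noteq> tr q" if "p < n" "q < n" "p \<noteq> q" for p q
    using tr_inj[of p n q s0] that st unfolding tr_def by blast
  have t0: "tr s0 = 0" unfolding tr_def using st by simp
  have t0': "tr (Suc s0 mod n) = 1" using trs[of s0] t0 n6 by simp
  define t1 where "t1 = tr s1"
  define t2 where "t2 = tr s2"
  have d1: "t1 \<noteq> 0" "t1 \<noteq> 1" "Suc t1 mod n \<noteq> 0" "Suc t1 mod n \<noteq> 1"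
    "t2 \<noteq> 0" "t2 \<noteq> 1" "Suc t2 mod n \<noteq> 0" "Suc t2 mod n \<noteq> 1"
    "t1 \<noteq> t2" "t1 \<noteq> Suc t2 mod n" "Suc t1 mod n \<noteq> t2" "Suc t1 mod n \<noteq> Suc t2 mod n"
    unfolding t1_def t2_def
    using trinj[of s1 s0] trinj[of s1 "Suc s0 mod n"] trinj[of "Suc s1 mod n" s0]
      trinj[of "Suc s1 mod n" "Suc s0 mod n"]
      trinj[of s2 s0] trinj[of s2 "Suc s0 mod n"] trinj[of "Suc s2 mod n" s0]
      trinj[of "Suc s2 mod n" "Suc s0 mod n"]
      trinj[of s1 s2] trinj[of s1 "Suc s2 mod n"] trinj[of "Suc s1 mod n" s2]
      trinj[of "Suc s1 mod n" "Suc s2 mod n"]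
      dp st smn t0 t0' trs[of s1] trs[of s2] by auto
  have lt1: "Suc t1 < n" "Suc t1 mod n = Suc t1" using d1(3) trlt[of s1] suc_mod[of t1 n] unfolding t1_def by (auto split: if_splits)
  have lt2: "Suc t2 < n" "Suc t2 mod n = Suc t2" using d1(7) trlt[of s2] suc_mod[of t2 n] unfolding t2_def by (auto split: if_splits)
  have L: "w' ! 0 = w ! s0" "w' ! 1 = w ! (Suc s0 mod n)" "w' ! t1 = w ! s1" "w' ! (t1 + 1) = w ! (Suc s1 mod n)"
     "w' ! t2 = w ! s2" "w' ! (t2 + 1) = w ! (Suc s2 mod n)"
    using trw[of s0] trw[of "Suc s0 mod n"] trw[of s1] trw[of "Suc s1 mod n"] trw[of s2] trw[of "Suc s2 mod n"]
      st smn t0 t0' trs[of s1] trs[of s2] lt1 lt2 unfolding t1_def t2_def by simp_all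
  define a where "a = w ! s0"
  define b where "b = w ! (Suc s0 mod n)"
  have ab: "{a,b} = {c0,c1}" "a \<noteq> b" using b0 cd unfolding a_def b_def by auto
  have tab: "tyB w a b c2"
    by (rule tyB_perm[OF t]) (use ab cd in auto)
  have tB: "(interlaced w a b \<and> \<not> interlaced w b c2 \<and> \<not> interlaced w a c2) \<or>
             (\<not> interlaced w a b \<and> interlaced w b c2 \<and> \<not> interlaced w a c2) \<or>
             (\<not> interlaced w a b \<and> \<not> interlaced w b c2 \<and> interlaced w a c2)"
    using tab unfolding tyB_def using interlaced_sym[of w c2 a] by simp
  have dist: "a \<noteq> b" "b \<noteq> c2" "a \<noteq> c2" using ab cd by auto
  show ?thesis
  proof (cases "t1 < t2")
    case True
    then have "Suc t1 < t2" using d1 lt1 by simp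
    then obtain U1 U2 U3 where W: "w' = [w'!0, w'!1] @ U1 @ [w'!t1, w'!(t1+1)] @ U2 @ [w'!t2, w'!(t2+1)] @ U3"
      using split5[of t1 t2 w'] d1 lt2 lw by (metis One_nat_def Suc_eq_plus1 Suc_leI less_2_cases_iff not_less)
    show ?thesis
    proof (rule cfg[OF g cw W[unfolded L, folded a_def b_def] dist _ tB])
      show "(w ! s1 = a \<and> w ! (Suc s1 mod n) = c2 \<or> w ! s1 = c2 \<and> w ! (Suc s1 mod n) = a) \<and>
    (w ! s2 = b \<and> w ! (Suc s2 mod n) = c2 \<or> w ! s2 = c2 \<and> w ! (Suc s2 mod n) = b) \<or>
    (w ! s1 = b \<and> w ! (Suc s1 mod n) = c2 \<or> w ! s1 = c2 \<and> w ! (Suc s1 mod n) = b) \<and>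
    (w ! s2 = a \<and> w ! (Suc s2 mod n) = c2 \<or> w ! s2 = c2 \<and> w ! (Suc s2 mod n) = a)"
        using b0 b1 b2 cd unfolding a_def b_def by auto
    qed
  next
    case False
    then have "Suc t2 < t1" using d1 lt2 by (metis Suc_lessI linorder_neqE_nat)
    then obtain U1 U2 U3 where W: "w' = [w'!0, w'!1] @ U1 @ [w'!t2, w'!(t2+1)] @ U2 @ [w'!t1, w'!(t1+1)] @ U3"
      using split5[of t2 t1 w'] d1 lt1 lw by (metis One_nat_def Suc_eq_plus1 Suc_leI less_2_cases_iff not_less)
    show ?thesis
    proof (rule cfg[OF g cw W[unfolded L, folded a_def b_def] dist _ tB])
      show "(w ! s2 = a \<and> w ! (Suc s2 mod n) = c2 \<or> w ! s2 = c2 \<and> w ! (Suc s2 mod n) = a) \<and>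
    (w ! s1 = b \<and> w ! (Suc s1 mod n) = c2 \<or> w ! s1 = c2 \<and> w ! (Suc s1 mod n) = b) \<or>
    (w ! s2 = b \<and> w ! (Suc s2 mod n) = c2 \<or> w ! s2 = c2 \<and> w ! (Suc s2 mod n) = b) \<and>
    (w ! s1 = a \<and> w ! (Suc s1 mod n) = c2 \<or> w ! s1 = c2 \<and> w ! (Suc s1 mod n) = a)"
        using b0 b1 b2 cd unfolding a_def b_def by auto
    qed
  qed
qed

lemma darts_iff: "d \<in> darts w \<longleftrightarrow> fst d < length w"
  by (cases d) (simp add: darts_def)

lemma fp_fst:
  assumes g: "gauss_word w" and d: "fst d < length w"
  shows "fst (face_perm w s d) = partner w (fst (edge_flip w d))"
proof -
  obtain k b where kb: "d = (k, b)" by (cases d)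
  obtain k' b' where e: "edge_flip w (k, b) = (k', b')" by (cases "edge_flip w (k, b)")
  have "k' < length w" using ef_lt[of k w b] d kb e by simp
  then show ?thesis unfolding face_perm_def kb using rot_fst[OF g, of k' s b'] e by simp
qed

lemma fp_lt:
  assumes g: "gauss_word w" and d: "fst d < length w"
  shows "fst (face_perm w s d) < length w"
proof -
  obtain k b where kb: "d = (k, b)" by (cases d)
  have "fst (edge_flip w d) < length w" using ef_lt[of k w b] d kb by simp
  then show ?thesis using fp_fst[OF g d, of s] partner_props[OF g] by simp
qed

lemma fp_inj:
  assumes g: "gauss_word w" and d: "fst d < length w" and d': "fst d' < length w"
    and e: "face_perm w s d = face_perm w s d'"
  shows "d = d'"
proof -
  obtain k b where kb: "d = (k, b)" by (cases d)
  obtain k' b' where kb': "d' = (k', b')" by (cases d')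
  obtain m c where m: "edge_flip w (k, b) = (m, c)" by (cases "edge_flip w (k, b)")
  obtain m' c' where m': "edge_flip w (k', b') = (m', c')" by (cases "edge_flip w (k', b')")
  have ml: "m < length w" "m' < length w" using ef_lt[of k w b] ef_lt[of k' w b'] d d' kb kb' m m' by simp_all
  have "rot w s (m, c) = rot w s (m', c')" using e m m' kb kb' unfolding face_perm_def by simp
  then have "m = m' \<and> c = c'" using rot_inj[OF g ml] by blast
  then have "edge_flip w (k, b) = edge_flip w (k', b')" using m m' by simp
  then show ?thesis using ef_inj[of k w k' b b'] d d' kb kb' by simp
qed

lemma face_sub:
  assumes "d0 \<in> S" "\<And>d. d \<in> S \<Longrightarrow> face_perm w s d \<in> S"
  shows "face_of w s d0 \<subseteq> S"
proof -
  have "(face_perm w s ^^ k) d0 \<in> S" for k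
    by (induction k) (use assms in auto)
  then show ?thesis unfolding face_of_def by auto
qed

lemma face_mem: "(face_perm w s ^^ k) d0 \<in> face_of w s d0"
  unfolding face_of_def by auto

lemma dart_block:
  assumes g: "gauss_word w" and d: "fst d < length w"
  shows "\<exists>st. st < length w \<and> fst (edge_flip w d) < length w \<and>
     ((st = fst d \<and> Suc st mod length w = fst (edge_flip w d)) \<or>
      (st = fst (edge_flip w d) \<and> Suc st mod length w = fst d)) \<and>
     w ! fst (edge_flip w d) = w ! fst (face_perm w s d) \<and>
     fst (edge_flip w d) \<noteq> fst (face_perm w s d)"
proof -
  obtain k b where kb: "d = (k, b)" by (cases d)
  have k: "k < length w" using d kb by simp
  define m where "m = fst (edge_flip w (k, b))"
  have ml: "m < length w" unfolding m_def by (rule ef_lt[OF k])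
  have fp: "fst (face_perm w s d) = partner w m" using fp_fst[OF g d, of s] kb m_def by simp
  have pm: "w ! partner w m = w ! m" "partner w m \<noteq> m" using partner_props[OF g ml] by auto
  have e: "fst (edge_flip w d) = m" "fst d = k" using kb m_def by simp_all
  show ?thesis unfolding e fp
  proof (cases b)
    case True
    have "m = Suc k mod length w" using True m_def by simp
    then show "\<exists>st. st < length w \<and> m < length w \<and>
     (st = k \<and> Suc st mod length w = m \<or> st = m \<and> Suc st mod length w = k) \<and>
     w ! m = w ! partner w m \<and> m \<noteq> partner w m" using k ml pm by (intro exI[of _ k]) auto
  next
    case False
    have mm: "m = fst (edge_flip w (k, False))" using False m_def by simp
    have "k = Suc m mod length w" unfolding mm by (rule ef_false[OF k])
    then show "\<exists>st. st < length w \<and> m < length w \<and>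
     (st = k \<and> Suc st mod length w = m \<or> st = m \<and> Suc st mod length w = k) \<and>
     w ! m = w ! partner w m \<and> m \<noteq> partner w m" using k ml pm by (intro exI[of _ m]) auto
  qed
qed

theorem mainTheorem5:
  fixes w :: "'a list" and s :: "'a \<Rightarrow> bool"
  assumes "spherical_curve w s"
    and "has_trigon_type_B w s"
  shows "reductivity w \<le> 3"
proof -
  have g: "gauss_word w" using assms(1) unfolding spherical_curve_def by simp
  obtain R x y z where T: "is_trigon w s R x y z" and tx: "tyB w x y z"
    using assms(2) unfolding has_trigon_type_B_def tyB_def by blast
  have RR: "R \<in> regions w s" "card R = 3" "x \<noteq> y" "y \<noteq> z" "x \<noteq> z" "crossing_at w ` R = {x, y, z}"
    using T unfolding is_trigon_def by simp_all
  obtain d0 where d0: "d0 \<in> darts w" "R = face_of w s d0" using RR(1) unfolding regions_def by blast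
  define f where "f = face_perm w s"
  define d1 where "d1 = f d0"
  define d2 where "d2 = f d1"
  have l0: "fst d0 < length w" using d0(1) darts_iff by blast
  have l1: "fst d1 < length w" unfolding d1_def f_def by (rule fp_lt[OF g l0])
  have l2: "fst d2 < length w" unfolding d2_def f_def by (rule fp_lt[OF g l1])
  have mem: "d0 \<in> R" "d1 \<in> R" "d2 \<in> R" "f d2 \<in> R"
    using face_mem[of 0 w s d0] face_mem[of 1 w s d0] face_mem[of 2 w s d0] face_mem[of 3 w s d0]
    unfolding d0(2) d1_def d2_def f_def by (simp_all add: numeral_eq_Suc)
  have fin: "finite R" using RR(2) by (metis card_ge_0_finite zero_less_numeral)
  have n10: "d1 \<noteq> d0"
  proof
    assume h: "d1 = d0"
    have "R \<subseteq> {d0}" unfolding d0(2)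
      by (rule face_sub) (use h in \<open>auto simp: d1_def f_def\<close>)
    then have "card R \<le> 1" using card_mono[of "{d0}" R] by simp
    then show False using RR(2) by simp
  qed
  have n2: "d2 \<noteq> d0 \<and> d2 \<noteq> d1"
  proof (rule ccontr)
    assume h: "\<not> (d2 \<noteq> d0 \<and> d2 \<noteq> d1)"
    have "R \<subseteq> {d0, d1}" unfolding d0(2)
      by (rule face_sub) (use h in \<open>auto simp: d1_def d2_def f_def\<close>)
    moreover have "card {d0, d1} \<le> 2" by (cases "d0 = d1") simp_all
    ultimately have "card R \<le> 2" using card_mono[of "{d0, d1}" R] by simp
    then show False using RR(2) by simp
  qed
  have R3: "R = {d0, d1, d2}"
  proof -
    have "card {d0, d1, d2} = 3" using n10 n2 by (auto simp: card_insert_if)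
    then show ?thesis using card_subset_eq[OF fin, of "{d0,d1,d2}"] mem RR(2) by simp
  qed
  have d3: "f d2 = d0"
  proof -
    have "f d2 = d0 \<or> f d2 = d1 \<or> f d2 = d2" using mem(4) R3 by simp
    moreover have "f d2 \<noteq> d1"
    proof
      assume "f d2 = d1"
      then have "f d2 = f d0" unfolding d1_def .
      then have "d2 = d0" using fp_inj[OF g l2 l0] unfolding f_def by blast
      then show False using n2 by simp
    qed
    moreover have "f d2 \<noteq> d2"
    proof
      assume "f d2 = d2"
      then have "f d2 = f d1" unfolding d2_def by simp
      then have "d2 = d1" using fp_inj[OF g l2 l1] unfolding f_def by blast
      then show False using n2 by simp
    qed
    ultimately show ?thesis by simp
  qed
  define c0 where "c0 = w ! fst d0"
  define c1 where "c1 = w ! fst d1"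
  define c2 where "c2 = w ! fst d2"
  have cs: "{c0, c1, c2} = {x, y, z}" using RR(6) unfolding R3 crossing_at_def c0_def c1_def c2_def by simp
  have cxyz: "card {x, y, z} = 3" using RR(3-5) by simp
  have cd: "c0 \<noteq> c1" "c1 \<noteq> c2" "c0 \<noteq> c2"
  proof -
    have c3: "card {c0, c1, c2} = 3" using cs cxyz by simp
    show "c0 \<noteq> c1" using c3 by (auto simp: card_insert_if split: if_splits)
    show "c1 \<noteq> c2" using c3 by (auto simp: card_insert_if split: if_splits)
    show "c0 \<noteq> c2" using c3 by (auto simp: card_insert_if split: if_splits)
  qed
  have tc: "tyB w c0 c1 c2" by (rule tyB_perm[OF tx cs cd])
  obtain s0 where B0: "s0 < length w" "fst (edge_flip w d0) < length w"
     "(s0 = fst d0 \<and> Suc s0 mod length w = fst (edge_flip w d0)) \<or>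
      (s0 = fst (edge_flip w d0) \<and> Suc s0 mod length w = fst d0)"
     "w ! fst (edge_flip w d0) = w ! fst (f d0)" "fst (edge_flip w d0) \<noteq> fst (f d0)"
    using dart_block[OF g l0, of s] unfolding f_def by blast
  obtain s1 where B1: "s1 < length w" "fst (edge_flip w d1) < length w"
     "(s1 = fst d1 \<and> Suc s1 mod length w = fst (edge_flip w d1)) \<or>
      (s1 = fst (edge_flip w d1) \<and> Suc s1 mod length w = fst d1)"
     "w ! fst (edge_flip w d1) = w ! fst (f d1)" "fst (edge_flip w d1) \<noteq> fst (f d1)"
    using dart_block[OF g l1, of s] unfolding f_def by blast
  obtain s2 where B2: "s2 < length w" "fst (edge_flip w d2) < length w"
     "(s2 = fst d2 \<and> Suc s2 mod length w = fst (edge_flip w d2)) \<or>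
      (s2 = fst (edge_flip w d2) \<and> Suc s2 mod length w = fst d2)"
     "w ! fst (edge_flip w d2) = w ! fst (f d2)" "fst (edge_flip w d2) \<noteq> fst (f d2)"
    using dart_block[OF g l2, of s] unfolding f_def by blast
  define k0 where "k0 = fst d0"
  define k1 where "k1 = fst d1"
  define k2 where "k2 = fst d2"
  define m0 where "m0 = fst (edge_flip w d0)"
  define m1 where "m1 = fst (edge_flip w d1)"
  define m2 where "m2 = fst (edge_flip w d2)"
  have fk: "fst (f d0) = k1" "fst (f d1) = k2" "fst (f d2) = k0"
    unfolding k0_def k1_def k2_def d1_def d2_def using d3 d2_def d1_def by simp_all
  have lets: "w ! k0 = c0" "w ! k1 = c1" "w ! k2 = c2" "w ! m0 = c1" "w ! m1 = c2" "w ! m2 = c0"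
    "m0 \<noteq> k1" "m1 \<noteq> k2" "m2 \<noteq> k0"
    using B0(4,5) B1(4,5) B2(4,5) fk unfolding k0_def k1_def k2_def m0_def m1_def m2_def c0_def c1_def c2_def
    by simp_all
  have B0': "(s0 = k0 \<and> Suc s0 mod length w = m0) \<or> (s0 = m0 \<and> Suc s0 mod length w = k0)"
    using B0(3) unfolding k0_def m0_def .
  have B1': "(s1 = k1 \<and> Suc s1 mod length w = m1) \<or> (s1 = m1 \<and> Suc s1 mod length w = k1)"
    using B1(3) unfolding k1_def m1_def .
  have B2': "(s2 = k2 \<and> Suc s2 mod length w = m2) \<or> (s2 = m2 \<and> Suc s2 mod length w = k2)"
    using B2(3) unfolding k2_def m2_def .
  have ne: "k0 \<noteq> k1" "k0 \<noteq> k2" "k1 \<noteq> k2" "m0 \<noteq> m1" "m0 \<noteq> m2" "m1 \<noteq> m2"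
    "k0 \<noteq> m0" "k0 \<noteq> m1" "k1 \<noteq> m1" "k1 \<noteq> m2" "k2 \<noteq> m0" "k2 \<noteq> m2"
    using lets cd by auto
  have pd: "distinct [k0, k1, k2, m0, m1, m2]"
    using ne lets(7-9) by auto
  show ?thesis
  proof (rule assemble[OF g refl B0(1) B1(1) B2(1) _ cd _ _ _ tc])
    show "distinct [s0, Suc s0 mod length w, s1, Suc s1 mod length w, s2, Suc s2 mod length w]"
      using pd B0' B1' B2' by auto
    show "w ! s0 = c0 \<and> w ! (Suc s0 mod length w) = c1 \<or> w ! s0 = c1 \<and> w ! (Suc s0 mod length w) = c0"
      using B0' lets by auto
    show "w ! s1 = c1 \<and> w ! (Suc s1 mod length w) = c2 \<or> w ! s1 = c2 \<and> w ! (Suc s1 mod length w) = c1"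
      using B1' lets by auto
    show "w ! s2 = c2 \<and> w ! (Suc s2 mod length w) = c0 \<or> w ! s2 = c0 \<and> w ! (Suc s2 mod length w) = c2"
      using B2' lets by auto
  qed
qed

end
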